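(* Consider the $1$-center problem in $\mathbb{R}^1$ where object $i$ has its own maximum speed $v_i>0$. Let $v_M=\max_i v_i$ and $v_m=\min_i v_i$. There is an absolute constant $C$ such that on every instance $I$ with $n$ objects, the measure of the Round-robin strategy is at most $C\,\frac{v_M n}{v_m}\cdot \mathrm{OPT}(I)$.
   Context: Setting. There are $n\ge 2$ objects in $\mathbb{R}^d$; object $i$ follows a trajectory $p_i:[0,\infty)\to\mathbb{R}^d$ with $|p_i(t)-p_i(s)|\le v_i|t-s|$ for all $s,t$, where $v_i>0$ is a known speed bound for object $i$. The initial positions $p_i(0)$ are known. A query strategy queries one object at each time $t=1,2,3,\dots$; querying object $i$ at time $t$ reveals $p_i(t)$. For $t\ge 0$ let $\tau_i(t)$ be the last time $\le t$ at which object $i$ was queried (or $0$ if never). The uncertainty region of object $i$ at time $t$ is the closed ball $U_i(t)$ of radius $v_i(t-\tau_i(t))$ centered at $p_i(\tau_i(t))$. For a center function $f$ mapping an $n$-tuple of points to a point, the uncertainty region of the center at time $t$ is $\{f(q_1,\dots,q_n): q_i\in U_i(t)\}$. The size of a set is its diameter. The measure of a strategy on an instance is the supremum over $t\in\{1,2,\dots\}$ of the size of the center's uncertainty region at time $t$ (just after the query at time $t$). The optimal measure $\mathrm{OPT}(I)$ of an instance $I$ is the infimum of the measure over all query sequences, which may be chosen with full knowledge of the trajectories. The Round-robin strategy queries objects $1,2,\dots,n,1,2,\dots,n,\dots$ in a fixed cyclic order. Here $d=1$ and the center function is the $1$-center: for $x_1,\dots,x_n\in\mathbb{R}$ it is $(\max_i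 x_i+\min_i x_i)/2$. *)

theory Defs
  imports "HOL-Analysis.Analysis"
begin

text \<open>Objects are indexed 0,...,n-1. A trajectory assignment is p :: nat => real => real
  (only the values on [0,infinity) matter), speeds v :: nat => real.
  A query strategy is a sequence q :: nat => nat: at time t >= 1 it queries object q t.\<close>

definition valid_instance :: "nat \<Rightarrow> (nat \<Rightarrow> real) \<Rightarrow> (nat \<Rightarrow> real \<Rightarrow> real) \<Rightarrow> bool" where
  "valid_instance n v p \<longleftrightarrow> n \<ge> 2 \<and> (\<forall>i<n. v i > 0) \<and>
     (\<forall>i<n. \<forall>s t. 0 \<le> s \<longrightarrow> 0 \<le> t \<longrightarrow> \<bar>p i t - p i s\<bar> \<le> v i * \<bar>t - s\<bar>)"

definition valid_strategy :: "nat \<Rightarrow> (nat \<Rightarrow> nat) \<Rightarrow> bool" where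
  "valid_strategy n q \<longleftrightarrow> (\<forall>t\<ge>1. q t < n)"

definition last_query :: "(nat \<Rightarrow> nat) \<Rightarrow> nat \<Rightarrow> nat \<Rightarrow> nat" where
  "last_query q i t = Max ({s. 1 \<le> s \<and> s \<le> t \<and> q s = i} \<union> {0})"

definition uncertainty_region ::
    "(nat \<Rightarrow> real) \<Rightarrow> (nat \<Rightarrow> real \<Rightarrow> real) \<Rightarrow> (nat \<Rightarrow> nat) \<Rightarrow> nat \<Rightarrow> nat \<Rightarrow> real set" where
  "uncertainty_region v p q i t =
     cball (p i (real (last_query q i t))) (v i * (real t - real (last_query q i t)))"

definition one_center :: "nat \<Rightarrow> (nat \<Rightarrow> real) \<Rightarrow> real" where
  "one_center n x = (Max (x ` {..<n}) + Min (x ` {..<n})) / 2"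

definition center_region ::
    "nat \<Rightarrow> (nat \<Rightarrow> real) \<Rightarrow> (nat \<Rightarrow> real \<Rightarrow> real) \<Rightarrow> (nat \<Rightarrow> nat) \<Rightarrow> nat \<Rightarrow> real set" where
  "center_region n v p q t =
     {one_center n x | x. \<forall>i<n. x i \<in> uncertainty_region v p q i t}"

text \<open>Measure of a strategy: supremum over t = 1,2,... of the diameter of the center region
  (in the extended reals, since it may be unbounded).\<close>
definition strategy_measure ::
    "nat \<Rightarrow> (nat \<Rightarrow> real) \<Rightarrow> (nat \<Rightarrow> real \<Rightarrow> real) \<Rightarrow> (nat \<Rightarrow> nat) \<Rightarrow> ereal" where
  "strategy_measure n v p q = (SUP t\<in>{1..}. ereal (diameter (center_region n v p q t)))"

definition OPT :: "nat \<Rightarrow> (nat \<Rightarrow> real) \<Rightarrow> (nat \<Rightarrow> real \<Rightarrow> real) \<Rightarrow> ereal" where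
  "OPT n v p = (INF q\<in>{q. valid_strategy n q}. strategy_measure n v p q)"

definition round_robin :: "nat \<Rightarrow> nat \<Rightarrow> nat" where
  "round_robin n t = (t - 1) mod n"

end

theory Submission imports Defs begin

lemma max_diff:
  fixes f g :: "'a \<Rightarrow> real"
  assumes "finite I" "I \<noteq> {}" "\<forall>i\<in>I. \<bar>f i - g i\<bar> \<le> d"
  shows "\<bar>Max (f ` I) - Max (g ` I)\<bar> \<le> d"
proof -
  have A: "Max (f ` I) \<le> Max (g ` I) + d" if "finite I" "I \<noteq> {}" "\<forall>i\<in>I. \<bar>f i - g i\<bar> \<le> d" for f g :: "'a \<Rightarrow> real"
  proof -
    have "Max (f ` I) \<in> f ` I" using that by (intro Max_in) auto
    then obtain i where i: "i \<in> I" "f i = Max (f ` I)" by (metis imageE)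
    have "g i \<le> Max (g ` I)" using that i by auto
    moreover have "\<bar>f i - g i\<bar> \<le> d" using that(3) i(1) by blast
    ultimately show ?thesis using i(2) by linarith
  qed
  have "Max (f ` I) \<le> Max (g ` I) + d" using A assms by blast
  moreover have "Max (g ` I) \<le> Max (f ` I) + d" using A[of g f] assms by (simp add: abs_minus_commute)
  ultimately show ?thesis by (intro abs_leI) linarith+
qed

lemma min_diff:
  fixes f g :: "'a \<Rightarrow> real"
  assumes "finite I" "I \<noteq> {}" "\<forall>i\<in>I. \<bar>f i - g i\<bar> \<le> d"
  shows "\<bar>Min (f ` I) - Min (g ` I)\<bar> \<le> d"
proof -
  have A: "Min (f ` I) \<le> Min (g ` I) + d" if "finite I" "I \<noteq> {}" "\<forall>i\<in>I. \<bar>f i - g i\<bar> \<le> d" for f g :: "'a \<Rightarrow> real"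
  proof -
    have "Min (g ` I) \<in> g ` I" using that by (intro Min_in) auto
    then obtain i where i: "i \<in> I" "g i = Min (g ` I)" by (metis imageE)
    have "Min (f ` I) \<le> f i" using that i by auto
    moreover have "\<bar>f i - g i\<bar> \<le> d" using that(3) i(1) by blast
    ultimately show ?thesis using i(2) by linarith
  qed
  have "Min (f ` I) \<le> Min (g ` I) + d" using A assms by blast
  moreover have "Min (g ` I) \<le> Min (f ` I) + d" using A[of g f] assms by (simp add: abs_minus_commute)
  ultimately show ?thesis by (intro abs_leI) linarith+
qed

lemma avg_aux: "\<bar>(A::real) - B\<bar> \<le> d \<Longrightarrow> \<bar>C - D\<bar> \<le> d \<Longrightarrow> \<bar>(A + C) / 2 - (B + D) / 2\<bar> \<le> d"
  by (auto simp: abs_le_iff field_simps)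

lemma half_aux: "2 * (w::real) \<le> X - Y \<Longrightarrow> w \<le> X / 2 - Y / 2"
  by (auto simp: field_simps)

lemma center_lip:
  assumes "n \<ge> 1" "\<forall>i<n. \<bar>x i - y i\<bar> \<le> d"
  shows "\<bar>one_center n x - one_center n y\<bar> \<le> d"
proof -
  have "0 \<in> {..<n}" using assms by simp
  hence ne: "{..<n} \<noteq> {}" by blast
  have "\<bar>Max (x ` {..<n}) - Max (y ` {..<n})\<bar> \<le> d"
    apply (rule max_diff) apply simp apply (rule ne) using assms by auto
  moreover have "\<bar>Min (x ` {..<n}) - Min (y ` {..<n})\<bar> \<le> d"
    apply (rule min_diff) apply simp apply (rule ne) using assms by auto
  ultimately show ?thesis unfolding one_center_def by (rule avg_aux)
qed

lemma region_bound:
  assumes "n \<ge> 1" "\<forall>i<n. 0 \<le> v i * (real t - real (last_query q i t)) \<and> v i * (real t - real (last_query q i t)) \<le> R"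
    "z \<in> center_region n v p q t" "w \<in> center_region n v p q t"
  shows "\<bar>z - w\<bar> \<le> 2 * R"
proof -
  obtain x where x: "z = one_center n x" "\<forall>i<n. x i \<in> uncertainty_region v p q i t"
    using assms(3) unfolding center_region_def by blast
  obtain y where y: "w = one_center n y" "\<forall>i<n. y i \<in> uncertainty_region v p q i t"
    using assms(4) unfolding center_region_def by blast
  have "\<forall>i<n. \<bar>x i - y i\<bar> \<le> 2 * R"
  proof (intro allI impI)
    fix i assume i: "i < n"
    have "x i \<in> cball (p i (real (last_query q i t))) (v i * (real t - real (last_query q i t)))"
      "y i \<in> cball (p i (real (last_query q i t))) (v i * (real t - real (last_query q i t)))"
      using x y i unfolding uncertainty_region_def by auto
    then show "\<bar>x i - y i\<bar> \<le> 2 * R" using assms(2) i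
      unfolding mem_cball dist_real_def by (smt (verit))
  qed
  thus ?thesis using center_lip[OF assms(1)] x y by blast
qed

lemma last_query_le: "last_query q i t \<le> t"
proof -
  have "finite ({s. 1 \<le> s \<and> s \<le> t \<and> q s = i} \<union> {0})"
    by (rule finite_subset[of _ "{0..t}"]) auto
  thus ?thesis unfolding last_query_def by (subst Max_le_iff) auto
qed

lemma last_query_ge: "1 \<le> s \<Longrightarrow> s \<le> t \<Longrightarrow> q s = i \<Longrightarrow> s \<le> last_query q i t"
proof -
  assume h: "1 \<le> s" "s \<le> t" "q s = i"
  have "finite ({s. 1 \<le> s \<and> s \<le> t \<and> q s = i} \<union> {0})"
    by (rule finite_subset[of _ "{0..t}"]) auto
  thus ?thesis unfolding last_query_def using h by (intro Max_ge) auto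
qed

lemma last_query_1: "last_query q i 1 = (if q 1 = i then 1 else 0)"
proof -
  have "{s. 1 \<le> s \<and> s \<le> (1::nat) \<and> q s = i} = (if q 1 = i then {1} else {})"
    by (auto simp: le_antisym)
  thus ?thesis unfolding last_query_def by auto
qed

lemma rr_gap:
  assumes "i < n" "t \<ge> 1"
  shows "t \<le> last_query (round_robin n) i t + n"
proof (cases "t \<le> n")
  case True thus ?thesis by simp
next
  case False
  define r where "r = (t - 1) mod n"
  define qq where "qq = (t - 1) div n"
  have tq: "t - 1 = qq * n + r" unfolding r_def qq_def by simp
  have rn: "r < n" using assms unfolding r_def by simp
  have q1: "qq \<ge> 1"
  proof (rule ccontr)
    assume "\<not> qq \<ge> 1" hence "qq = 0" by simp
    with tq rn False assms(2) show False by simp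
  qed
  show ?thesis
  proof (cases "i \<le> r")
    case True
    define s where "s = qq * n + i + 1"
    have "(s - 1) mod n = i" unfolding s_def using assms by simp
    moreover have "1 \<le> s" "s \<le> t" "t \<le> s + n" unfolding s_def using tq True rn assms by auto
    ultimately show ?thesis using last_query_ge[of s t "round_robin n" i]
      unfolding round_robin_def by auto
  next
    case False
    obtain q' where q': "qq = Suc q'" using q1 by (cases qq) auto
    define s where "s = q' * n + i + 1"
    have tq': "t - 1 = q' * n + n + r" using tq q' by simp
    have "(s - 1) mod n = i" unfolding s_def using assms by simp
    moreover have "1 \<le> s" "s \<le> t" "t \<le> s + n" unfolding s_def using tq' False rn assms
      by linarith+
    ultimately show ?thesis using last_query_ge[of s t "round_robin n" i]
      unfolding round_robin_def by auto
  qed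
qed

lemma lower_gap:
  fixes a b :: "nat \<Rightarrow> real"
  assumes n: "n \<ge> 2" and k: "k < n" and ab: "\<forall>i<n. a i \<le> b i"
    and w: "\<forall>i<n. i \<noteq> k \<longrightarrow> b i - a i \<ge> 2 * w"
  shows "one_center n b - one_center n a \<ge> w"
proof -
  let ?I = "{..<n}"
  have "0 \<in> ?I" using n by simp
  hence ne: "?I \<noteq> {}" by blast
  have fin: "finite ?I" by simp
  have "Max (a ` ?I) \<in> a ` ?I" using ne fin by (intro Max_in) auto
  then obtain M where M0: "M \<in> ?I" "Max (a ` ?I) = a M" by blast
  hence M: "M < n" "a M = Max (a ` ?I)" by auto
  have "Min (b ` ?I) \<in> b ` ?I" using ne fin by (intro Min_in) auto
  then obtain m where m0: "m \<in> ?I" "Min (b ` ?I) = b m" by blast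
  hence m: "m < n" "b m = Min (b ` ?I)" by auto
  have Mb: "\<And>i. i < n \<Longrightarrow> b i \<le> Max (b ` ?I)" by simp
  have ma: "\<And>i. i < n \<Longrightarrow> Min (a ` ?I) \<le> a i" by simp
  have Ma: "\<And>i. i < n \<Longrightarrow> a i \<le> Max (a ` ?I)" by simp
  have mb: "\<And>i. i < n \<Longrightarrow> Min (b ` ?I) \<le> b i" by simp
  define j where "j = (if k = 0 then 1 else 0::nat)"
  have j: "j < n" "j \<noteq> k" unfolding j_def using n by auto
  have "Max (b ` ?I) + Min (b ` ?I) - (Max (a ` ?I) + Min (a ` ?I)) \<ge> 2 * w"
  proof (cases "M \<noteq> k")
    case True
    have "b M - a M \<ge> 2*w" using w M True by auto
    moreover have "a m \<le> b m" using ab m by auto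
    ultimately show ?thesis using Mb[OF M(1)] M m ma[OF m(1)] by linarith
  next
    case False
    show ?thesis
    proof (cases "m \<noteq> k")
      case True
      have "b m - a m \<ge> 2*w" using w m True by auto
      moreover have "a M \<le> b M" using ab M by auto
      ultimately show ?thesis using ma[OF m(1)] M m Mb[OF M(1)] by linarith
    next
      case False2: False
      have "b j - a j \<ge> 2*w" using w j by auto
      moreover have "a k \<le> b k" using ab k by auto
      moreover have "Max (a ` ?I) \<le> Min (b ` ?I)" using M m False False2 calculation(2) by simp
      ultimately show ?thesis using Mb[OF j(1)] ma[OF j(1)] by linarith
    qed
  qed
  thus ?thesis unfolding one_center_def by (rule half_aux)
qed

theorem proposition2:
  shows "\<exists>C::real. \<forall>n (v::nat \<Rightarrow> real) (p::nat \<Rightarrow> real \<Rightarrow> real).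
    valid_instance n v p \<longrightarrow>
    strategy_measure n v p (round_robin n)
      \<le> ereal (C * (Max (v ` {..<n}) * real n) / Min (v ` {..<n})) * OPT n v p"
proof (intro exI allI impI)
  fix n v p assume VI: "valid_instance n v p"
  have n2: "n \<ge> 2" and vpos: "\<forall>i<n. v i > 0" using VI unfolding valid_instance_def by auto
  let ?I = "{..<n}"
  define vM where "vM = Max (v ` ?I)"
  define vm where "vm = Min (v ` ?I)"
  have "0 \<in> ?I" using n2 by simp
  hence ne: "?I \<noteq> {}" by blast
  have fin: "finite ?I" by simp
  have vM: "\<And>i. i < n \<Longrightarrow> v i \<le> vM" unfolding vM_def by simp
  have vm: "\<And>i. i < n \<Longrightarrow> vm \<le> v i" unfolding vm_def by simp
  have vmpos: "vm > 0" using Min_in[of "v ` ?I"] ne fin vpos unfolding vm_def by auto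
  have n1: "n \<ge> 1" using n2 by simp
  have v0: "0 < v 0" using vpos n2 by simp
  have vMnn: "0 \<le> vM" using vM[of 0] v0 n2 by simp
  have up: "diameter (center_region n v p (round_robin n) t) \<le> 2 * (vM * real n)" if t: "t \<ge> 1" for t
  proof (rule diameter_le)
    show "center_region n v p (round_robin n) t \<noteq> {} \<or> 0 \<le> 2 * (vM * real n)"
    proof -
      have "0 < v 0" using vpos n2 by simp
      moreover have "v 0 \<le> vM" using vM n2 by simp
      ultimately show ?thesis by simp
    qed
  next
    fix x y assume xy: "x \<in> center_region n v p (round_robin n) t" "y \<in> center_region n v p (round_robin n) t"
    have "\<forall>i<n. 0 \<le> v i * (real t - real (last_query (round_robin n) i t)) \<and>
           v i * (real t - real (last_query (round_robin n) i t)) \<le> vM * real n"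
    proof (intro allI impI conjI)
      fix i assume i: "i < n"
      have l1: "real (last_query (round_robin n) i t) \<le> real t" using last_query_le by simp
      have l2: "real t - real (last_query (round_robin n) i t) \<le> real n"
        using rr_gap[OF i t] by linarith
      have "0 \<le> real t - real (last_query (round_robin n) i t)" using l1 by linarith
      moreover have "0 \<le> v i" using vpos i by force
      ultimately show "0 \<le> v i * (real t - real (last_query (round_robin n) i t))"
        by (rule mult_nonneg_nonneg[rotated])
      show "v i * (real t - real (last_query (round_robin n) i t)) \<le> vM * real n"
        by (rule mult_mono) (use l1 l2 vM[OF i] vpos i in auto)
    qed
    then show "norm (x - y) \<le> 2 * (vM * real n)"
      using region_bound[OF n1 _ xy] by simp
  qed
  have RR: "strategy_measure n v p (round_robin n) \<le> ereal (2 * (vM * real n))"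
    unfolding strategy_measure_def by (rule SUP_least) (use up in auto)
  have low: "strategy_measure n v p q \<ge> ereal vm" if q: "valid_strategy n q" for q
  proof -
    define k where "k = q 1"
    have k: "k < n" using q unfolding valid_strategy_def k_def by auto
    define c where "c = (\<lambda>i. p i (real (last_query q i 1)))"
    define r where "r = (\<lambda>i. v i * (1 - real (last_query q i 1)))"
    have r: "\<And>i. i < n \<Longrightarrow> 0 \<le> r i \<and> r i \<le> vM" unfolding r_def last_query_1
      using vpos vM vMnn by auto
    have rk: "\<And>i. i < n \<Longrightarrow> i \<noteq> k \<Longrightarrow> r i = v i" unfolding r_def last_query_1 k_def by auto
    define a where "a = (\<lambda>i. c i - r i)"
    define b where "b = (\<lambda>i. c i + r i)"
    have ina: "one_center n a \<in> center_region n v p q 1"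
      unfolding center_region_def uncertainty_region_def
      using r by (auto simp: a_def c_def r_def dist_real_def)
    have inb: "one_center n b \<in> center_region n v p q 1"
      unfolding center_region_def uncertainty_region_def
      using r by (auto simp: b_def c_def r_def dist_real_def)
    have rb: "\<forall>i<n. 0 \<le> v i * (real 1 - real (last_query q i 1)) \<and>
           v i * (real 1 - real (last_query q i 1)) \<le> vM"
      using r unfolding r_def by simp
    have bnd: "bounded (center_region n v p q 1)"
      unfolding bounded_def
      by (rule exI[of _ "one_center n a"], rule exI[of _ "2 * vM"])
         (use region_bound[OF n1 rb ina] in \<open>auto simp: dist_real_def\<close>)
    have gap: "one_center n b - one_center n a \<ge> vm"
      by (rule lower_gap[OF n2 k]) (use r rk vm in \<open>auto simp: a_def b_def\<close>)
    have "dist (one_center n b) (one_center n a) \<le> diameter (center_region n v p q 1)"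
      by (rule diameter_bounded_bound[OF bnd inb ina])
    then have "vm \<le> diameter (center_region n v p q 1)" using gap by (simp add: dist_real_def)
    then show ?thesis unfolding strategy_measure_def
      by (meson SUP_upper atLeast_iff ereal_less_eq(3) order.trans order_refl)
  qed
  have OPTl: "ereal vm \<le> OPT n v p" unfolding OPT_def by (rule INF_greatest) (use low in auto)
  have cnn: "0 \<le> 2 * (vM * real n) / vm" using vMnn vmpos by simp
  have "strategy_measure n v p (round_robin n) \<le> ereal (2 * (vM * real n) / vm) * ereal vm"
    using RR vmpos by simp
  also have "\<dots> \<le> ereal (2 * (vM * real n) / vm) * OPT n v p"
    by (rule ereal_mult_left_mono[OF OPTl]) (use cnn in simp)
  finally show "strategy_measure n v p (round_robin n)
      \<le> ereal (2 * (Max (v ` {..<n}) * real n) / Min (v ` {..<n})) * OPT n v p"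
    unfolding vM_def vm_def .
qed

end
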